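(* Every $m$-step decodable POMDP has, for every $h\in[H-m+1]$, the set $\mathcal{U}_h=\mathcal{O}\times(\mathcal{A}\times\mathcal{O})^{m-1}$ of all length-$m$ tests as a core test set.
   Context: An episodic POMDP has finite state space $\mathcal{S}$, finite $\mathcal{O},\mathcal{A}$, horizon $H$, initial distribution, transitions $\mathbb{T}_h(s'\mid s,a)$ and emissions $\mathbb{O}_h(o\mid s)$. It is $m$-step decodable if there are (unknown) maps $\phi_{\mathrm{dec},h}$ such that for every reachable trajectory, $s_h=\phi_{\mathrm{dec},h}(z_h)$ for all $h\in[H]$, where $z_h=(o_{\max\{h-m+1,1\}},a_{\max\{h-m+1,1\}},\dots,o_{h-1},a_{h-1},o_h)$. Histories $\tau_{h-1}=(o_1,a_1,\dots,o_{h-1},a_{h-1})$. A test starting at step $h$ is $t=(o_h,\dots,o_{h+W-1},a_h,\dots,a_{h+W-2})$; $\mathbb{P}(t\mid\tau_{h-1})$ is the probability of observing $o_{h:h+W-1}$ when executing $a_{h:h+W-2}$ after $\tau_{h-1}$ ($0$ if unreachable). A set $\mathcal{U}_h$ of tests starting at $h$ is a core test set if for every test $t$ starting at $h$ there is a history-independent $m_{t,h}\in\mathbb{R}^{|\mathcal{U}_h|}$ with $\mathbb{P}(t\mid\tau_{h-1})=\langle m_{t,h},[\mathbb{P}(u\mid\tau_{h-1})]_{u\in\mathcal{U}_h}\rangle$ for all $\tau_{h-1}$. *)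

theory Defs
  imports "HOL-Analysis.Analysis"
begin

text \<open>Steps are numbered 1..H.
  mu s      : initial distribution over s_1
  Tr h s a s' : transition probability T_h(s' | s, a)
  Em h s ob   : emission probability O_h(ob | s)\<close>

definition is_pomdp ::
  "nat \<Rightarrow> ('s::finite \<Rightarrow> real) \<Rightarrow> (nat \<Rightarrow> 's \<Rightarrow> 'a::finite \<Rightarrow> 's \<Rightarrow> real)
   \<Rightarrow> (nat \<Rightarrow> 's \<Rightarrow> 'o::finite \<Rightarrow> real) \<Rightarrow> bool" where
  "is_pomdp H mu Tr Em \<longleftrightarrow>
     (\<forall>s. 0 \<le> mu s) \<and> (\<Sum>s\<in>UNIV. mu s) = 1 \<and>
     (\<forall>h s a s'. 1 \<le> h \<and> h < H \<longrightarrow> 0 \<le> Tr h s a s') \<and>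
     (\<forall>h s a. 1 \<le> h \<and> h < H \<longrightarrow> (\<Sum>s'\<in>UNIV. Tr h s a s') = 1) \<and>
     (\<forall>h s ob. 1 \<le> h \<and> h \<le> H \<longrightarrow> 0 \<le> Em h s ob) \<and>
     (\<forall>h s. 1 \<le> h \<and> h \<le> H \<longrightarrow> (\<Sum>ob\<in>UNIV. Em h s ob) = 1)"

text \<open>A full trajectory (s_1,o_1,a_1,...,s_H,o_H) is given by lists ss (length H),
  os (length H), as (length H-1). It is reachable if it has positive probability.\<close>

definition reachable_traj ::
  "nat \<Rightarrow> ('s::finite \<Rightarrow> real) \<Rightarrow> (nat \<Rightarrow> 's \<Rightarrow> 'a::finite \<Rightarrow> 's \<Rightarrow> real)
   \<Rightarrow> (nat \<Rightarrow> 's \<Rightarrow> 'o::finite \<Rightarrow> real) \<Rightarrow> 's list \<Rightarrow> 'o list \<Rightarrow> 'a list \<Rightarrow> bool" where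
  "reachable_traj H mu Tr Em ss os as \<longleftrightarrow>
     length ss = H \<and> length os = H \<and> length as = H - 1 \<and> 0 < H \<and>
     0 < mu (ss ! 0) \<and>
     (\<forall>i<H. 0 < Em (Suc i) (ss ! i) (os ! i)) \<and>
     (\<forall>i. i + 1 < H \<longrightarrow> 0 < Tr (Suc i) (ss ! i) (as ! i) (ss ! Suc i))"

text \<open>The decoding window z_h = (o_{max(h-m+1,1)}, a_{max(h-m+1,1)}, ..., o_{h-1}, a_{h-1}, o_h),
  represented as the list of (observation, action) pairs together with the last observation o_h.\<close>

definition window_pairs :: "nat \<Rightarrow> nat \<Rightarrow> 'o list \<Rightarrow> 'a list \<Rightarrow> ('o \<times> 'a) list" where
  "window_pairs m h os as = drop (h - m) (take (h - 1) (zip os as))"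

definition m_step_decodable ::
  "nat \<Rightarrow> nat \<Rightarrow> ('s::finite \<Rightarrow> real) \<Rightarrow> (nat \<Rightarrow> 's \<Rightarrow> 'a::finite \<Rightarrow> 's \<Rightarrow> real)
   \<Rightarrow> (nat \<Rightarrow> 's \<Rightarrow> 'o::finite \<Rightarrow> real) \<Rightarrow> bool" where
  "m_step_decodable m H mu Tr Em \<longleftrightarrow>
     (\<exists>dec :: nat \<Rightarrow> ('o \<times> 'a) list \<Rightarrow> 'o \<Rightarrow> 's.
        \<forall>ss os as. reachable_traj H mu Tr Em ss os as \<longrightarrow>
          (\<forall>h. 1 \<le> h \<and> h \<le> H \<longrightarrow>
             ss ! (h - 1) = dec h (window_pairs m h os as) (os ! (h - 1))))"

text \<open>Forward (unnormalised) belief propagation: starting from weight b over s_h,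
  process pairs (o_h,a_h), (o_{h+1},a_{h+1}), ...\<close>

fun fwd :: "(nat \<Rightarrow> 's::finite \<Rightarrow> 'a \<Rightarrow> 's \<Rightarrow> real) \<Rightarrow> (nat \<Rightarrow> 's \<Rightarrow> 'o \<Rightarrow> real)
             \<Rightarrow> nat \<Rightarrow> ('s \<Rightarrow> real) \<Rightarrow> ('o \<times> 'a) list \<Rightarrow> ('s \<Rightarrow> real)" where
  "fwd Tr Em h b [] = b"
| "fwd Tr Em h b ((ob, a) # xs) =
     fwd Tr Em (Suc h) (\<lambda>s'. \<Sum>s\<in>UNIV. b s * Em h s ob * Tr h s a s') xs"

text \<open>A test starting at h of length W, t = (o_h,...,o_{h+W-1}, a_h,...,a_{h+W-2}),
  is represented as the list of pairs [(o_h,a_h),...,(o_{h+W-2},a_{h+W-2})] and the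
  final observation o_{h+W-1}; so W = length (fst t) + 1.
  A history tau_{h-1} = (o_1,a_1,...,o_{h-1},a_{h-1}) is a list of h-1 pairs.\<close>

type_synonym ('o, 'a) test = "('o \<times> 'a) list \<times> 'o"

definition test_weight :: "(nat \<Rightarrow> 's::finite \<Rightarrow> 'a \<Rightarrow> 's \<Rightarrow> real) \<Rightarrow> (nat \<Rightarrow> 's \<Rightarrow> 'o \<Rightarrow> real)
             \<Rightarrow> nat \<Rightarrow> ('s \<Rightarrow> real) \<Rightarrow> ('o, 'a) test \<Rightarrow> real" where
  "test_weight Tr Em h b t =
     (\<Sum>s\<in>UNIV. fwd Tr Em h b (fst t) s * Em (h + length (fst t)) s (snd t))"

text \<open>P(t | tau_{h-1}) with h = length tau + 1: probability of observing the test's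
  observations when executing its actions after history tau; 0 if tau is unreachable
  (i.e. the observations of tau have probability 0 under its actions).\<close>

definition test_prob :: "('s::finite \<Rightarrow> real) \<Rightarrow> (nat \<Rightarrow> 's \<Rightarrow> 'a \<Rightarrow> 's \<Rightarrow> real)
             \<Rightarrow> (nat \<Rightarrow> 's \<Rightarrow> 'o \<Rightarrow> real) \<Rightarrow> ('o, 'a) test \<Rightarrow> ('o \<times> 'a) list \<Rightarrow> real" where
  "test_prob mu Tr Em t tau =
     (let b = fwd Tr Em 1 mu tau; Z = (\<Sum>s\<in>UNIV. b s)
      in if Z = 0 then 0 else test_weight Tr Em (Suc (length tau)) b t / Z)"

definition core_test_set :: "nat \<Rightarrow> ('s::finite \<Rightarrow> real) \<Rightarrow> (nat \<Rightarrow> 's \<Rightarrow> 'a::finite \<Rightarrow> 's \<Rightarrow> real)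
             \<Rightarrow> (nat \<Rightarrow> 's \<Rightarrow> 'o::finite \<Rightarrow> real) \<Rightarrow> nat \<Rightarrow> ('o, 'a) test set \<Rightarrow> bool" where
  "core_test_set H mu Tr Em h U \<longleftrightarrow>
     finite U \<and>
     (\<forall>t. h + length (fst t) \<le> H \<longrightarrow>
        (\<exists>mt :: ('o, 'a) test \<Rightarrow> real.
           \<forall>tau. length tau = h - 1 \<longrightarrow>
             test_prob mu Tr Em t tau = (\<Sum>u\<in>U. mt u * test_prob mu Tr Em u tau)))"

definition all_tests_len :: "nat \<Rightarrow> ('o, 'a) test set" where
  "all_tests_len m = {t. length (fst t) = m - 1}"

end

theory Submission
  imports Defs
begin

lemma fwd_append:
  "fwd Tr Em k b (xs @ ys) = fwd Tr Em (k + length xs) (fwd Tr Em k b xs) ys"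
  by (induction xs arbitrary: k b) auto

lemma fwd_lin:
  fixes g :: "'s \<Rightarrow> 's::finite \<Rightarrow> real"
  shows "fwd Tr Em k (\<lambda>x. \<Sum>s\<in>UNIV. f s * g s x) xs y = (\<Sum>s\<in>UNIV. f s * fwd Tr Em k (g s) xs y)"
proof (induction xs arbitrary: k g)
  case Nil
  then show ?case by simp
next
  case (Cons p xs)
  obtain ob a where p: "p = (ob, a)" by (cases p)
  have eq: "(\<lambda>s'. \<Sum>x\<in>UNIV. (\<Sum>s\<in>UNIV. f s * g s x) * Em k x ob * Tr k x a s')
      = (\<lambda>s'. \<Sum>s\<in>UNIV. f s * (\<Sum>x\<in>UNIV. g s x * Em k x ob * Tr k x a s'))"
    by (auto simp: sum_distrib_left sum_distrib_right mult.assoc intro!: ext sum.swap)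
  show ?case using Cons[of "Suc k" "\<lambda>s s'. \<Sum>x\<in>UNIV. g s x * Em k x ob * Tr k x a s'"]
    by (simp add: p eq)
qed

lemma ext1:
  fixes Tr :: "nat \<Rightarrow> 's::finite \<Rightarrow> 'a::finite \<Rightarrow> 's \<Rightarrow> real"
    and Em :: "nat \<Rightarrow> 's \<Rightarrow> 'o::finite \<Rightarrow> real"
  assumes P: "is_pomdp H mu Tr Em" and h: "1 \<le> h" "h + length ps + 1 \<le> H"
  shows "test_weight Tr Em h b (ps, ob) = (\<Sum>o'\<in>UNIV. test_weight Tr Em h b (ps @ [(ob, a)], o'))"
proof -
  let ?k = "h + length ps"
  define X where "X s = fwd Tr Em h b ps s * Em ?k s ob" for s
  have T1: "(\<Sum>s'\<in>UNIV. Tr ?k s a s') = 1" for s using P h unfolding is_pomdp_def by auto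
  have E1: "(\<Sum>o'\<in>UNIV. Em (Suc ?k) s' o') = 1" for s' using P h unfolding is_pomdp_def by auto
  have "(\<Sum>o'\<in>UNIV. test_weight Tr Em h b (ps @ [(ob, a)], o'))
     = (\<Sum>o'\<in>UNIV. \<Sum>s'\<in>UNIV. (\<Sum>s\<in>UNIV. X s * Tr ?k s a s') * Em (Suc ?k) s' o')"
    unfolding test_weight_def X_def by (simp add: fwd_append mult.assoc)
  also have "\<dots> = (\<Sum>s'\<in>UNIV. (\<Sum>s\<in>UNIV. X s * Tr ?k s a s') * (\<Sum>o'\<in>UNIV. Em (Suc ?k) s' o'))"
    by (subst sum.swap) (simp add: sum_distrib_left)
  also have "\<dots> = (\<Sum>s'\<in>UNIV. \<Sum>s\<in>UNIV. X s * Tr ?k s a s')" using E1 by simp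
  also have "\<dots> = (\<Sum>s\<in>UNIV. X s * (\<Sum>s'\<in>UNIV. Tr ?k s a s'))"
    by (subst sum.swap) (simp add: sum_distrib_left)
  also have "\<dots> = (\<Sum>s\<in>UNIV. X s)" using T1 by simp
  finally show ?thesis unfolding test_weight_def X_def by simp
qed


lemma fwd_nonneg:
  fixes Tr :: "nat \<Rightarrow> 's::finite \<Rightarrow> 'a::finite \<Rightarrow> 's \<Rightarrow> real"
    and Em :: "nat \<Rightarrow> 's \<Rightarrow> 'o::finite \<Rightarrow> real"
  assumes P: "is_pomdp H mu Tr Em"
  shows "(\<forall>s. 0 \<le> b s) \<Longrightarrow> 1 \<le> k \<Longrightarrow> k + length xs \<le> H \<Longrightarrow> 0 \<le> fwd Tr Em k b xs s"
proof (induction xs arbitrary: k b)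
  case Nil
  then show ?case by simp
next
  case (Cons p xs)
  obtain ob a where p: "p = (ob, a)" by (cases p)
  have "0 \<le> (\<Sum>s\<in>UNIV. b s * Em k s ob * Tr k s a s')" for s'
    using Cons.prems P unfolding is_pomdp_def by (auto intro!: sum_nonneg)
  then show ?case using Cons by (simp add: p)
qed

definition goodp where
  "goodp mu Tr Em (S :: nat \<Rightarrow> _) (Ob :: nat \<Rightarrow> _) (Ac :: nat \<Rightarrow> _) j \<longleftrightarrow>
     0 < mu (S 0) \<and> (\<forall>i<j. 0 < Em (Suc i) (S i) (Ob i)) \<and>
     (\<forall>i. i + 1 < j \<longrightarrow> 0 < Tr (Suc i) (S i) (Ac i) (S (Suc i)))"

lemma backward:
  fixes Tr :: "nat \<Rightarrow> 's::finite \<Rightarrow> 'a::finite \<Rightarrow> 's \<Rightarrow> real"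
    and Em :: "nat \<Rightarrow> 's \<Rightarrow> 'o::finite \<Rightarrow> real"
  assumes P: "is_pomdp H mu Tr Em"
  shows "length Pl < H \<Longrightarrow> fwd Tr Em 1 mu Pl s \<noteq> 0 \<Longrightarrow>
    \<exists>S. S (length Pl) = s \<and> 0 < mu (S 0) \<and> (\<forall>i<length Pl. 0 < Em (Suc i) (S i) (fst (Pl!i))
        \<and> 0 < Tr (Suc i) (S i) (snd (Pl!i)) (S (Suc i)))"
proof (induction Pl arbitrary: s rule: rev_induct)
  case Nil
  then show ?case using P unfolding is_pomdp_def
    by (intro exI[of _ "\<lambda>_. s"]) (auto simp: order.order_iff_strict)
next
  case (snoc p Pl)
  obtain ob a where p: "p = (ob, a)" by (cases p)
  let ?n = "length Pl"
  have "fwd Tr Em 1 mu (Pl @ [p]) s = (\<Sum>x\<in>UNIV. fwd Tr Em 1 mu Pl x * Em (Suc ?n) x ob * Tr (Suc ?n) x a s)"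
    by (simp add: fwd_append p)
  with snoc.prems have "(\<Sum>x\<in>UNIV. fwd Tr Em 1 mu Pl x * Em (Suc ?n) x ob * Tr (Suc ?n) x a s) \<noteq> 0"
    by simp
  then obtain x where x: "fwd Tr Em 1 mu Pl x * Em (Suc ?n) x ob * Tr (Suc ?n) x a s \<noteq> 0"
    using sum.neutral[of UNIV "\<lambda>x. fwd Tr Em 1 mu Pl x * Em (Suc ?n) x ob * Tr (Suc ?n) x a s"] by blast
  have nn1: "0 \<le> fwd Tr Em 1 mu Pl x"
    using snoc.prems P by (intro fwd_nonneg[OF P]) (auto simp: is_pomdp_def)
  have nn2: "0 \<le> Em (Suc ?n) x ob" "0 \<le> Tr (Suc ?n) x a s"
    using snoc.prems P by (auto simp: is_pomdp_def)
  have pos: "0 < fwd Tr Em 1 mu Pl x" "0 < Em (Suc ?n) x ob" "0 < Tr (Suc ?n) x a s"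
    using x nn1 nn2 by (auto simp: order.order_iff_strict)
  from snoc.IH[of x] snoc.prems pos obtain S where S: "S ?n = x" "0 < mu (S 0)"
    "\<forall>i<?n. 0 < Em (Suc i) (S i) (fst (Pl!i)) \<and> 0 < Tr (Suc i) (S i) (snd (Pl!i)) (S (Suc i))"
    by auto
  show ?case
  proof (intro exI[of _ "S(Suc ?n := s)"] conjI allI impI)
    fix i assume i: "i < length (Pl @ [p])"
    show "0 < Em (Suc i) ((S(Suc ?n := s)) i) (fst ((Pl @ [p]) ! i))"
      using S pos i p by (cases "i < ?n") (auto simp: nth_append less_Suc_eq)
    show "0 < Tr (Suc i) ((S(Suc ?n := s)) i) (snd ((Pl @ [p]) ! i)) ((S(Suc ?n := s)) (Suc i))"
      using S pos i p by (cases "i < ?n") (auto simp: nth_append less_Suc_eq)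
  qed (use S in auto)
qed


lemma pos_exists:
  fixes f :: "'x::finite \<Rightarrow> real"
  assumes "\<forall>x. 0 \<le> f x" "(\<Sum>x\<in>UNIV. f x) = 1"
  shows "\<exists>x. 0 < f x"
proof (rule ccontr)
  assume "\<not> ?thesis"
  then have "\<forall>x. f x = 0" using assms(1) by (meson not_less order.antisym)
  then show False using assms(2) by simp
qed

lemma extend:
  fixes Tr :: "nat \<Rightarrow> 's::finite \<Rightarrow> 'a::finite \<Rightarrow> 's \<Rightarrow> real"
    and Em :: "nat \<Rightarrow> 's \<Rightarrow> 'o::finite \<Rightarrow> real"
  assumes P: "is_pomdp H mu Tr Em"
  shows "H - j = d \<Longrightarrow> goodp mu Tr Em S Ob Ac j \<Longrightarrow> 1 \<le> j \<Longrightarrow> j \<le> H \<Longrightarrow>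
    \<exists>S' Ob' Ac'. goodp mu Tr Em S' Ob' Ac' H \<and> (\<forall>i<j. S' i = S i \<and> Ob' i = Ob i)
       \<and> (\<forall>i. i + 1 < j \<longrightarrow> Ac' i = Ac i)"
proof (induction d arbitrary: j S Ob Ac)
  case 0
  then have "j = H" by simp
  then show ?case using 0 by blast
next
  case (Suc d)
  have jH: "j < H" using Suc.prems by simp
  obtain a0 :: 'a where True by simp
  obtain s' where s': "0 < Tr j (S (j - 1)) a0 s'"
    using pos_exists[of "Tr j (S (j - 1)) a0"] P Suc.prems jH unfolding is_pomdp_def by auto
  obtain o' where o': "0 < Em (Suc j) s' o'"
    using pos_exists[of "Em (Suc j) s'"] P Suc.prems jH unfolding is_pomdp_def by auto
  let ?S = "S(j := s')" and ?O = "Ob(j := o')" and ?A = "Ac(j - 1 := a0)"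
  have g: "goodp mu Tr Em ?S ?O ?A (Suc j)"
    unfolding goodp_def
  proof (intro conjI allI impI)
    show "0 < mu (?S 0)" using Suc.prems unfolding goodp_def by auto
  next
    fix i assume "i < Suc j"
    then show "0 < Em (Suc i) (?S i) (?O i)"
      using Suc.prems o' unfolding goodp_def by (cases "i < j") (auto simp: less_Suc_eq)
  next
    fix i assume i: "i + 1 < Suc j"
    show "0 < Tr (Suc i) (?S i) (?A i) (?S (Suc i))"
    proof (cases "i + 1 < j")
      case True
      then show ?thesis using Suc.prems unfolding goodp_def by auto
    next
      case False
      then have "i = j - 1" "Suc i = j" using i Suc.prems by auto
      then show ?thesis using s' Suc.prems by auto
    qed
  qed
  have d1: "H - Suc j = d" and d2: "1 \<le> Suc j" and d3: "Suc j \<le> H" using Suc.prems jH by auto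
  from Suc.IH[OF d1 g d2 d3] obtain S' Ob' Ac' where
    r: "goodp mu Tr Em S' Ob' Ac' H" "\<forall>i<Suc j. S' i = ?S i \<and> Ob' i = ?O i"
       "\<forall>i. i + 1 < Suc j \<longrightarrow> Ac' i = ?A i"
    by blast
  show ?case
    by (intro exI[of _ S'] exI[of _ Ob'] exI[of _ Ac']) (use r in auto)
qed

lemma take_zip_map:
  assumes "n \<le> H - 1"
  shows "take n (zip (map Ob [0..<H]) (map Ac [0..<H - 1])) = map (\<lambda>i. (Ob i, Ac i)) [0..<n]"
  using assms by (intro nth_equalityI) auto

lemma decode:
  fixes Tr :: "nat \<Rightarrow> 's::finite \<Rightarrow> 'a::finite \<Rightarrow> 's \<Rightarrow> real"
    and Em :: "nat \<Rightarrow> 's \<Rightarrow> 'o::finite \<Rightarrow> real"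
  assumes P: "is_pomdp H mu Tr Em"
    and D: "\<forall>ss os as. reachable_traj H mu Tr Em ss os as \<longrightarrow>
          (\<forall>h. 1 \<le> h \<and> h \<le> H \<longrightarrow>
             ss ! (h - 1) = dec h (window_pairs m h os as) (os ! (h - 1)))"
    and n: "length Pl = n" "n < H"
    and nz: "fwd Tr Em 1 mu Pl s * Em (Suc n) s ob \<noteq> 0"
  shows "s = dec (Suc n) (drop (Suc n - m) Pl) ob"
proof -
  have "0 \<le> Em (Suc n) s ob" using P n unfolding is_pomdp_def by auto
  then have Epos: "0 < Em (Suc n) s ob" using nz by (auto simp: order.order_iff_strict)
  from backward[OF P] n nz obtain S where S: "S n = s" "0 < mu (S 0)"
    "\<forall>i<n. 0 < Em (Suc i) (S i) (fst (Pl!i)) \<and> 0 < Tr (Suc i) (S i) (snd (Pl!i)) (S (Suc i))"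
    by fastforce
  define Ob where "Ob i = (if i < n then fst (Pl!i) else ob)" for i
  define Ac where "Ac i = snd (Pl!i)" for i
  have g: "goodp mu Tr Em S Ob Ac (Suc n)"
    unfolding goodp_def using S Epos by (auto simp: Ob_def Ac_def less_Suc_eq)
  from extend[OF P refl g] n obtain S' Ob' Ac' where
    r: "goodp mu Tr Em S' Ob' Ac' H" "\<forall>i<Suc n. S' i = S i \<and> Ob' i = Ob i"
       "\<forall>i. i + 1 < Suc n \<longrightarrow> Ac' i = Ac i" by auto
  define ss where "ss = map S' [0..<H]"
  define os where "os = map Ob' [0..<H]"
  define as where "as = map Ac' [0..<H - 1]"
  have R: "reachable_traj H mu Tr Em ss os as"
    using r(1) n unfolding reachable_traj_def goodp_def ss_def os_def as_def by auto
  have hh: "1 \<le> Suc n \<and> Suc n \<le> H" using n by simp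
  have "ss ! (Suc n - 1) = dec (Suc n) (window_pairs m (Suc n) os as) (os ! (Suc n - 1))"
    using D R hh by blast
  moreover have "ss ! (Suc n - 1) = s" using S r n by (simp add: ss_def)
  moreover have "os ! (Suc n - 1) = ob" using r n by (simp add: os_def Ob_def)
  moreover have "take n (zip os as) = Pl"
    unfolding os_def as_def using n r
    by (subst take_zip_map) (auto intro!: nth_equalityI simp: Ob_def Ac_def)
  ultimately show ?thesis unfolding window_pairs_def by simp
qed


lemma finite_tests: "finite (all_tests_len m :: ('o::finite, 'a::finite) test set)"
proof -
  have "all_tests_len m = {xs :: ('o \<times> 'a) list. set xs \<subseteq> UNIV \<and> length xs = m - 1} \<times> (UNIV :: 'o set)"
    unfolding all_tests_len_def by auto
  then show ?thesis using finite_lists_length_eq[of "UNIV :: ('o \<times> 'a) set" "m - 1"] by simp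
qed

lemma sum_single:
  fixes U :: "'u set"
  assumes "finite U" "t \<in> U"
  shows "(\<Sum>u\<in>U. (if u = t then c else 0) * (w u :: real)) = c * w t"
proof -
  have "(\<Sum>u\<in>U. (if u = t then c else 0) * w u) = (\<Sum>u\<in>U. if u = t then c * w u else 0)"
    by (intro sum.cong) auto
  also have "\<dots> = c * w t" using assms by (simp add: sum.delta')
  finally show ?thesis .
qed

lemma repA:
  fixes Tr :: "nat \<Rightarrow> 's::finite \<Rightarrow> 'a::finite \<Rightarrow> 's \<Rightarrow> real"
    and Em :: "nat \<Rightarrow> 's \<Rightarrow> 'o::finite \<Rightarrow> real"
  assumes P: "is_pomdp H mu Tr Em" and h: "1 \<le> h" "h + m \<le> H + 1" "1 \<le> m"
  shows "m - 1 - length (fst t) = k \<Longrightarrow> length (fst t) \<le> m - 1 \<Longrightarrow>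
    \<exists>c. \<forall>b. test_weight Tr Em h b t =
      (\<Sum>u\<in>(all_tests_len m :: ('o, 'a) test set). c u * test_weight Tr Em h b u)"
proof (induction k arbitrary: t)
  case 0
  then have "t \<in> all_tests_len m" unfolding all_tests_len_def by auto
  then show ?case using sum_single[OF finite_tests, of t m "1::real"] by (intro exI[of _ "\<lambda>u. if u = t then 1 else 0"]) auto
next
  case (Suc k)
  obtain ps ob where t: "t = (ps, ob)" by (cases t)
  obtain a0 :: 'a where True by simp
  have "\<forall>o'. \<exists>c. \<forall>b. test_weight Tr Em h b (ps @ [(ob, a0)], o') =
      (\<Sum>u\<in>(all_tests_len m :: ('o, 'a) test set). c u * test_weight Tr Em h b u)"
    using Suc.IH Suc.prems t by auto
  from choice[OF this] obtain C where C: "\<And>o' b. test_weight Tr Em h b (ps @ [(ob, a0)], o') =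
      (\<Sum>u\<in>(all_tests_len m :: ('o, 'a) test set). C o' u * test_weight Tr Em h b u)"
    by blast
  show ?case
  proof (intro exI[of _ "\<lambda>u. \<Sum>o'\<in>UNIV. C o' u"] allI)
    fix b
    have "test_weight Tr Em h b t = (\<Sum>o'\<in>UNIV. test_weight Tr Em h b (ps @ [(ob, a0)], o'))"
      unfolding t using Suc.prems h t by (intro ext1[OF P]) auto
    also have "\<dots> = (\<Sum>o'\<in>UNIV. \<Sum>u\<in>all_tests_len m. C o' u * test_weight Tr Em h b u)"
      using C by simp
    also have "\<dots> = (\<Sum>u\<in>all_tests_len m. (\<Sum>o'\<in>UNIV. C o' u) * test_weight Tr Em h b u)"
      by (subst sum.swap) (simp add: sum_distrib_right)
    finally show "test_weight Tr Em h b t = (\<Sum>u\<in>all_tests_len m. (\<Sum>o'\<in>UNIV. C o' u) * test_weight Tr Em h b u)" .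
  qed
qed


lemma repB:
  fixes Tr :: "nat \<Rightarrow> 's::finite \<Rightarrow> 'a::finite \<Rightarrow> 's \<Rightarrow> real"
    and Em :: "nat \<Rightarrow> 's \<Rightarrow> 'o::finite \<Rightarrow> real"
  assumes P: "is_pomdp H mu Tr Em" and h: "1 \<le> h" "h + m \<le> H + 1" "1 \<le> m"
    and D: "\<forall>ss os as. reachable_traj H mu Tr Em ss os as \<longrightarrow>
          (\<forall>h. 1 \<le> h \<and> h \<le> H \<longrightarrow>
             ss ! (h - 1) = dec h (window_pairs m h os as) (os ! (h - 1)))"
    and L: "m \<le> length (fst t)"
  shows "\<exists>c. \<forall>tau. length tau = h - 1 \<longrightarrow> test_weight Tr Em h (fwd Tr Em 1 mu tau) t =
      (\<Sum>u\<in>(all_tests_len m :: ('o, 'a) test set). c u * test_weight Tr Em h (fwd Tr Em 1 mu tau) u)"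
proof -
  obtain ps ob where t: "t = (ps, ob)" by (cases t)
  define ps1 where "ps1 = take (m - 1) ps"
  define o1 where "o1 = fst (ps ! (m - 1))"
  define a1 where "a1 = snd (ps ! (m - 1))"
  define ps2 where "ps2 = drop m ps"
  have mlt: "m - 1 < length ps" using L t h by auto
  have ps: "ps = ps1 @ (o1, a1) # ps2"
    unfolding ps1_def o1_def a1_def ps2_def using id_take_nth_drop[OF mlt] h by simp
  have l1: "length ps1 = m - 1" using mlt by (simp add: ps1_def)
  define k where "k = h + (m - 1)"
  define ss where "ss = dec k ps1 o1"
  define G where "G s = (\<Sum>s''\<in>UNIV. fwd Tr Em (Suc k) (\<lambda>s'. Tr k s a1 s') ps2 s'' * Em (h + length ps) s'' ob)" for s
  have u: "(ps1, o1) \<in> all_tests_len m" using l1 by (simp add: all_tests_len_def)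
  show ?thesis
  proof (intro exI[of _ "\<lambda>u. if u = (ps1, o1) then G ss else 0"] allI impI)
    fix tau :: "('o \<times> 'a) list" assume tau: "length tau = h - 1"
    define b where "b = fwd Tr Em 1 mu tau"
    define Bf where "Bf s = fwd Tr Em h b ps1 s * Em k s o1" for s
    have fwdps: "fwd Tr Em h b ps s'' = (\<Sum>s\<in>UNIV. Bf s * fwd Tr Em (Suc k) (\<lambda>s'. Tr k s a1 s') ps2 s'')" for s''
      unfolding ps fwd_append using l1 fwd_lin[of Tr Em "Suc k" "\<lambda>s. Bf s" "\<lambda>s s'. Tr k s a1 s'" ps2 s'']
      by (simp add: k_def Bf_def)
    have Wt: "test_weight Tr Em h b t = (\<Sum>s\<in>UNIV. Bf s * G s)"
      unfolding test_weight_def t G_def using fwdps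
      by (simp add: sum_distrib_right sum_distrib_left mult.assoc) (subst sum.swap, simp)
    have Wu: "test_weight Tr Em h b (ps1, o1) = (\<Sum>s\<in>UNIV. Bf s)"
      unfolding test_weight_def Bf_def k_def using l1 by simp
    have dz: "Bf s = 0" if "s \<noteq> ss" for s
    proof (rule ccontr)
      assume nz: "Bf s \<noteq> 0"
      have f: "fwd Tr Em 1 mu (tau @ ps1) = fwd Tr Em h b ps1"
        using tau h by (simp add: fwd_append b_def)
      have kk: "Suc (length (tau @ ps1)) = k" using tau l1 h by (simp add: k_def)
      have nzz: "fwd Tr Em 1 mu (tau @ ps1) s * Em (Suc (length (tau @ ps1))) s o1 \<noteq> 0"
        using nz unfolding f kk Bf_def .
      have lt: "length (tau @ ps1) < H" using kk h by (simp add: k_def)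
      have "s = dec (Suc (length (tau @ ps1))) (drop (Suc (length (tau @ ps1)) - m) (tau @ ps1)) o1"
        by (rule decode[OF P D refl lt nzz])
      then have "s = dec k (drop (k - m) (tau @ ps1)) o1" by (simp only: kk)
      moreover have dr: "drop (k - m) (tau @ ps1) = ps1" using tau l1 h by (simp add: k_def)
      ultimately have "s = ss" unfolding ss_def by (simp only: dr)
      with that show False by simp
    qed
    have s1: "(\<Sum>s\<in>UNIV. Bf s * G s) = Bf ss * G ss"
      by (subst sum.remove[of _ ss]) (auto simp: dz intro!: sum.neutral)
    have s2: "(\<Sum>s\<in>UNIV. Bf s) = Bf ss"
      by (subst sum.remove[of _ ss]) (auto simp: dz intro!: sum.neutral)
    show "test_weight Tr Em h (fwd Tr Em 1 mu tau) t =
      (\<Sum>u\<in>all_tests_len m. (if u = (ps1, o1) then G ss else 0) * test_weight Tr Em h (fwd Tr Em 1 mu tau) u)"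
      unfolding sum_single[OF finite_tests u] b_def[symmetric] Wt Wu s1 s2 by simp
  qed
qed


theorem lemma13:
  fixes H m :: nat
    and mu :: "'s::finite \<Rightarrow> real"
    and Tr :: "nat \<Rightarrow> 's \<Rightarrow> 'a::finite \<Rightarrow> 's \<Rightarrow> real"
    and Em :: "nat \<Rightarrow> 's \<Rightarrow> 'o::finite \<Rightarrow> real"
  assumes "is_pomdp H mu Tr Em"
    and "1 \<le> m"
    and "m_step_decodable m H mu Tr Em"
  shows "\<forall>h. 1 \<le> h \<and> h + m \<le> H + 1 \<longrightarrow>
           core_test_set H mu Tr Em h (all_tests_len m :: ('o, 'a) test set)"
proof (intro allI impI)
  fix h assume hh: "1 \<le> h \<and> h + m \<le> H + 1"
  then have h: "1 \<le> h" "h + m \<le> H + 1" by auto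
  obtain dec :: "nat \<Rightarrow> ('o \<times> 'a) list \<Rightarrow> 'o \<Rightarrow> 's" where D:
    "\<forall>ss os as. reachable_traj H mu Tr Em ss os as \<longrightarrow>
          (\<forall>h. 1 \<le> h \<and> h \<le> H \<longrightarrow>
             ss ! (h - 1) = dec h (window_pairs m h os as) (os ! (h - 1)))"
    using assms(3) unfolding m_step_decodable_def by blast
  show "core_test_set H mu Tr Em h (all_tests_len m :: ('o, 'a) test set)"
    unfolding core_test_set_def
  proof (intro conjI allI impI finite_tests)
    fix t :: "('o, 'a) test" assume tH: "h + length (fst t) \<le> H"
    have "\<exists>c. \<forall>tau. length tau = h - 1 \<longrightarrow> test_weight Tr Em h (fwd Tr Em 1 mu tau) t =
      (\<Sum>u\<in>(all_tests_len m :: ('o, 'a) test set). c u * test_weight Tr Em h (fwd Tr Em 1 mu tau) u)"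
    proof (cases "m \<le> length (fst t)")
      case True
      then show ?thesis using repB[OF assms(1) h assms(2) D True] by blast
    next
      case False
      then have "length (fst t) \<le> m - 1" by simp
      from repA[OF assms(1) h assms(2) refl this] obtain c0 where
        "\<forall>b. test_weight Tr Em h b t = (\<Sum>u\<in>(all_tests_len m :: ('o, 'a) test set). c0 u * test_weight Tr Em h b u)"
        by blast
      then show ?thesis by blast
    qed
    then obtain c where c: "\<And>tau. length tau = h - 1 \<Longrightarrow> test_weight Tr Em h (fwd Tr Em 1 mu tau) t =
      (\<Sum>u\<in>(all_tests_len m :: ('o, 'a) test set). c u * test_weight Tr Em h (fwd Tr Em 1 mu tau) u)"
      by blast
    show "\<exists>mt. \<forall>tau. length tau = h - 1 \<longrightarrow>
             test_prob mu Tr Em t tau = (\<Sum>u\<in>all_tests_len m. mt u * test_prob mu Tr Em u tau)"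
    proof (intro exI[of _ c] allI impI)
      fix tau :: "('o \<times> 'a) list" assume tau: "length tau = h - 1"
      have sh: "Suc (length tau) = h" using tau h by simp
      show "test_prob mu Tr Em t tau = (\<Sum>u\<in>all_tests_len m. c u * test_prob mu Tr Em u tau)"
        unfolding test_prob_def Let_def sh using c[OF tau]
        by (simp add: sum_divide_distrib)
    qed
  qed
qed

end
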